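(* Let $\beta>0$, $k>0$, $u_0<0$, $\Phi(u)=\beta\left(-\frac{u^4}{4}+\frac{k+u_0}{3}u^3-\frac{ku_0}{2}u^2\right)$, and let $\delta$ be the involution defined in the context. Then (i) if $-k<u_0<0$, $u+\delta(u)<0$ for all $u\in(0,u_1)$; (ii) if $u_0<-k$, $u+\delta(u)>0$ for all $u\in(0,k)$.
   Context: Case $-k<u_0<0$: $u_1$ is the unique point of $(0,k)$ with $\Phi(u_1)=\Phi(u_0)$, and for $u\in(0,u_1)$, $\delta(u)$ is the unique $w\in(u_0,0)$ with $\Phi(w)=\Phi(u)$. Case $u_0<-k$: $w_2$ is the unique point of $(u_0,0)$ with $\Phi(w_2)=\Phi(k)$, and for $u\in(0,k)$, $\delta(u)$ is the unique $w\in(w_2,0)$ with $\Phi(w)=\Phi(u)$. *)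

theory Defs
  imports Complex_Main
begin

definition Phi :: "real \<Rightarrow> real \<Rightarrow> real \<Rightarrow> real \<Rightarrow> real" where
  "Phi \<beta> k u0 u = \<beta> * (- (u ^ 4) / 4 + (k + u0) / 3 * u ^ 3 - k * u0 / 2 * u ^ 2)"

text \<open>Case -k < u0 < 0: u1 is the unique point of (0,k) with Phi u1 = Phi u0.\<close>
definition u1 :: "real \<Rightarrow> real \<Rightarrow> real \<Rightarrow> real" where
  "u1 \<beta> k u0 = (THE u. 0 < u \<and> u < k \<and> Phi \<beta> k u0 u = Phi \<beta> k u0 u0)"

text \<open>Case u0 < -k: w2 is the unique point of (u0,0) with Phi w2 = Phi k.\<close>
definition w2 :: "real \<Rightarrow> real \<Rightarrow> real \<Rightarrow> real" where
  "w2 \<beta> k u0 = (THE w. u0 < w \<and> w < 0 \<and> Phi \<beta> k u0 w = Phi \<beta> k u0 k)"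

text \<open>The involution delta (only meaningful for u in (0,u1), resp. (0,k)).\<close>
definition delta :: "real \<Rightarrow> real \<Rightarrow> real \<Rightarrow> real \<Rightarrow> real" where
  "delta \<beta> k u0 u =
     (if - k < u0
      then (THE w. u0 < w \<and> w < 0 \<and> Phi \<beta> k u0 w = Phi \<beta> k u0 u)
      else (THE w. w2 \<beta> k u0 < w \<and> w < 0 \<and> Phi \<beta> k u0 w = Phi \<beta> k u0 u))"

end

theory Submission
  imports Defs
begin

lemma Phi_cont: "continuous_on S (Phi \<beta> k u0)"
  unfolding Phi_def[abs_def] by (intro continuous_intros) auto

lemma Phi_deriv: "(Phi \<beta> k u0 has_real_derivative \<beta>*(- (x^3)+(k+u0)*x^2-k*u0*x)) (at x)"
  unfolding Phi_def[abs_def]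
  by (rule derivative_eq_intros refl | simp)+

lemma Phi_inc:
  assumes "\<beta> > 0" "c < 0" "0 \<le> a" "a < b" "b \<le> k"
  shows "Phi \<beta> k c a < Phi \<beta> k c b"
proof (rule DERIV_pos_imp_increasing_open[OF assms(4)])
  fix x assume x: "a < x" "x < b"
  have "- (x^3)+(k+c)*x^2-k*c*x = x*(k-x)*(x-c)" by (simp add: algebra_simps power2_eq_square power3_eq_cube)
  moreover have "x*(k-x)*(x-c) > 0" using x assms by (intro mult_pos_pos) auto
  ultimately show "\<exists>y. (Phi \<beta> k c has_real_derivative y) (at x) \<and> 0 < y"
    using Phi_deriv assms by fastforce
qed (rule Phi_cont)

lemma Phi_dec:
  assumes "\<beta> > 0" "k > 0" "c \<le> a" "a < b" "b \<le> 0"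
  shows "Phi \<beta> k c b < Phi \<beta> k c a"
proof -
  have "(\<lambda>x. - Phi \<beta> k c x) a < (\<lambda>x. - Phi \<beta> k c x) b"
  proof (rule DERIV_pos_imp_increasing_open[OF assms(4)])
    fix x assume x: "a < x" "x < b"
    have "(-x)*(k-x)*(x-c) > 0" using x assms by (intro mult_pos_pos) auto
    then have "\<beta>*((-x)*(k-x)*(x-c)) > 0" using assms(1) by (rule mult_pos_pos[rotated])
    moreover have "- (\<beta>*(- (x^3)+(k+c)*x^2-k*c*x)) = \<beta>*((-x)*(k-x)*(x-c))"
      by (simp add: algebra_simps power2_eq_square power3_eq_cube)
    ultimately show "\<exists>y. ((\<lambda>x. - Phi \<beta> k c x) has_real_derivative y) (at x) \<and> 0 < y"
      using DERIV_minus[OF Phi_deriv[of \<beta> k c x]] by metis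
  qed (intro continuous_on_minus Phi_cont)
  then show ?thesis by simp
qed

lemma ex_dec:
  assumes "\<beta> > 0" "k > 0" "c \<le> a" "a < b" "b \<le> 0"
    and "Phi \<beta> k c b < y" "y < Phi \<beta> k c a"
  shows "\<exists>!w. a < w \<and> w < b \<and> Phi \<beta> k c w = y"
proof -
  obtain x where x: "a \<le> x" "x \<le> b" "Phi \<beta> k c x = y"
    using IVT2'[of "Phi \<beta> k c" b y a, OF _ _ _ Phi_cont] assms by force
  have "a < x" "x < b" using x assms by (metis less_irrefl order_le_less)+
  moreover have "w = x" if "a < w" "w < b" "Phi \<beta> k c w = y" for w
  proof (rule ccontr)
    assume "w \<noteq> x"
    then consider "w < x" | "x < w" by linarith
    then show False
    proof cases
      case 1 then show False using Phi_dec[OF assms(1,2), where a=w and b=x and c=c] that x assms by linarith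
    next
      case 2 then show False using Phi_dec[OF assms(1,2), where a=x and b=w and c=c] that x assms \<open>a < x\<close> by linarith
    qed
  qed
  ultimately show ?thesis using x by blast
qed

lemma ex_inc:
  assumes "\<beta> > 0" "c < 0" "0 \<le> a" "a < b" "b \<le> k"
    and "Phi \<beta> k c a < y" "y < Phi \<beta> k c b"
  shows "\<exists>!w. a < w \<and> w < b \<and> Phi \<beta> k c w = y"
proof -
  obtain x where x: "a \<le> x" "x \<le> b" "Phi \<beta> k c x = y"
    using IVT'[of "Phi \<beta> k c" a y b, OF _ _ _ Phi_cont] assms by force
  have "a < x" "x < b" using x assms by (metis less_irrefl order_le_less)+
  moreover have "w = x" if "a < w" "w < b" "Phi \<beta> k c w = y" for w
  proof (rule ccontr)
    assume "w \<noteq> x"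
    then consider "w < x" | "x < w" by linarith
    then show False
    proof cases
      case 1 then show False using Phi_inc[OF assms(1,2), where a=w and b=x and k=k] that x assms by linarith
    next
      case 2 then show False using Phi_inc[OF assms(1,2), where a=x and b=w and k=k] that x assms \<open>a < x\<close> by linarith
    qed
  qed
  ultimately show ?thesis using x by blast
qed

lemma Phi_zero: "Phi \<beta> k u0 0 = 0" by (simp add: Phi_def)

lemma Phi_odd: "Phi \<beta> k u0 u - Phi \<beta> k u0 (-u) = \<beta> * (2*(k+u0)/3 * u^3)"
  unfolding Phi_def by (simp add: field_simps)

lemma Phi_diff: "Phi \<beta> k u0 k - Phi \<beta> k u0 u0 = \<beta> * ((k^2-u0^2)*(k-u0)^2/12)"
  unfolding Phi_def by (simp add: field_simps) algebra

theorem lemma3p5: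
  fixes \<beta> k u0 :: real
  assumes "\<beta> > 0" and "k > 0" and "u0 < 0"
  shows "(- k < u0 \<longrightarrow> (\<forall>u. 0 < u \<and> u < u1 \<beta> k u0 \<longrightarrow> u + delta \<beta> k u0 u < 0))
       \<and> (u0 < - k \<longrightarrow> (\<forall>u. 0 < u \<and> u < k \<longrightarrow> u + delta \<beta> k u0 u > 0))"
proof (intro conjI impI allI)
  let ?F = "Phi \<beta> k u0"
  fix u assume h: "- k < u0" and u: "0 < u \<and> u < u1 \<beta> k u0"
  have F0: "?F 0 < ?F u0" using Phi_dec[OF assms(1,2), where a=u0 and b=0 and c=u0] assms Phi_zero by simp
  have "(k-u0)*(k+u0) > 0" using h assms by (intro mult_pos_pos) auto
  then have "k^2 - u0^2 > 0" by (simp add: algebra_simps power2_eq_square)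
  then have "\<beta> * ((k^2-u0^2)*(k-u0)^2/12) > 0" using assms by (intro mult_pos_pos divide_pos_pos) auto
  then have Fk: "?F u0 < ?F k" using Phi_diff[of \<beta> k u0] by linarith
  have "\<exists>!w. 0 < w \<and> w < k \<and> ?F w = ?F u0"
    using ex_inc[OF assms(1,3), where a=0 and b=k and k=k and y="?F u0"] F0 Fk assms Phi_zero by simp
  note ex1 = this
  have U1: "0 < u1 \<beta> k u0" "u1 \<beta> k u0 < k" "?F (u1 \<beta> k u0) = ?F u0"
    using theI'[OF ex1] unfolding u1_def by simp_all
  have "\<beta> * (2*(k+u0)/3 * (-u0)^3) > 0" using assms h by (intro mult_pos_pos divide_pos_pos zero_less_power) auto
  then have "?F (-u0) - ?F u0 > 0" using Phi_odd[of \<beta> k u0 "-u0"] by simp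
  have "u1 \<beta> k u0 < -u0"
  proof (rule ccontr)
    assume "\<not> ?thesis"
    then consider "u1 \<beta> k u0 = -u0" | "-u0 < u1 \<beta> k u0" by linarith
    then show False
    proof cases
      case 1 then show False using U1 \<open>?F (-u0) - ?F u0 > 0\<close> by simp
    next
      case 2 then show False
        using Phi_inc[OF assms(1,3), where a="-u0" and b="u1 \<beta> k u0" and k=k] U1 assms \<open>?F (-u0) - ?F u0 > 0\<close> by simp
    qed
  qed
  have Fu: "?F u < ?F u0" using Phi_inc[OF assms(1,3), where a=u and b="u1 \<beta> k u0" and k=k] U1 u by auto
  have Fu0: "0 < ?F u" using Phi_inc[OF assms(1,3), where a=0 and b=u and k=k] U1 u Phi_zero by auto
  have "\<exists>!w. u0 < w \<and> w < 0 \<and> ?F w = ?F u"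
    using ex_dec[OF assms(1,2), where a=u0 and b=0 and c=u0 and y="?F u"] Fu Fu0 assms Phi_zero by simp
  note ex1 = this
  have D: "u0 < delta \<beta> k u0 u" "delta \<beta> k u0 u < 0" "?F (delta \<beta> k u0 u) = ?F u"
    using theI'[OF ex1] h unfolding delta_def by simp_all
  have "\<beta> * (2*(k+u0)/3 * u^3) > 0" using assms h u by (intro mult_pos_pos divide_pos_pos zero_less_power) auto
  then have "?F u - ?F (-u) > 0" using Phi_odd[of \<beta> k u0 u] by simp
  show "u + delta \<beta> k u0 u < 0"
  proof (rule ccontr)
    assume "\<not> ?thesis"
    then have "-u \<le> delta \<beta> k u0 u" by simp
    moreover have "u0 < -u" using \<open>u1 \<beta> k u0 < -u0\<close> u by simp
    ultimately have "?F (delta \<beta> k u0 u) \<le> ?F (-u)"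
      using Phi_dec[OF assms(1,2), where a="-u" and b="delta \<beta> k u0 u" and c=u0] D by force
    then show False using D \<open>?F u - ?F (-u) > 0\<close> by simp
  qed
next
  let ?F = "Phi \<beta> k u0"
  fix u assume h: "u0 < - k" and u: "0 < u \<and> u < k"
  have nh: "\<not> - k < u0" using h by simp
  have Fk0: "0 < ?F k" using Phi_inc[OF assms(1,3), where a=0 and b=k and k=k] assms Phi_zero by auto
  have "(-u0-k)*(k-u0) > 0" using h assms by (intro mult_pos_pos) auto
  then have "u0^2 - k^2 > 0" by (simp add: algebra_simps power2_eq_square)
  then have "\<beta> * ((u0^2-k^2)*(k-u0)^2/12) > 0" using assms by (intro mult_pos_pos divide_pos_pos) auto
  moreover have "\<beta> * ((k^2-u0^2)*(k-u0)^2/12) = - (\<beta> * ((u0^2-k^2)*(k-u0)^2/12))" by (simp add: field_simps)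
  ultimately have Fk: "?F k < ?F u0" using Phi_diff[of \<beta> k u0] by linarith
  have "\<exists>!w. u0 < w \<and> w < 0 \<and> ?F w = ?F k"
    using ex_dec[OF assms(1,2), where a=u0 and b=0 and c=u0 and y="?F k"] Fk Fk0 assms Phi_zero by simp
  note ex1 = this
  have W: "u0 < w2 \<beta> k u0" "w2 \<beta> k u0 < 0" "?F (w2 \<beta> k u0) = ?F k"
    using theI'[OF ex1] unfolding w2_def by simp_all
  have Fu: "?F u < ?F k" using Phi_inc[OF assms(1,3), where a=u and b=k and k=k] u by auto
  have Fu0: "0 < ?F u" using Phi_inc[OF assms(1,3), where a=0 and b=u and k=k] u Phi_zero by auto
  have "\<exists>!w. w2 \<beta> k u0 < w \<and> w < 0 \<and> ?F w = ?F u"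
    using ex_dec[OF assms(1,2), where a="w2 \<beta> k u0" and b=0 and c=u0 and y="?F u"] Fu Fu0 W assms Phi_zero by simp
  note ex1 = this
  have D: "w2 \<beta> k u0 < delta \<beta> k u0 u" "delta \<beta> k u0 u < 0" "?F (delta \<beta> k u0 u) = ?F u"
    using theI'[OF ex1] nh unfolding delta_def by simp_all
  have "-2*(k+u0) > 0" using h by (simp add: algebra_simps)
  then have "(-2*(k+u0))/3 > 0" by simp
  moreover have "u^3 > 0" using u by simp
  ultimately have "\<beta> * ((-2*(k+u0))/3 * u^3) > 0" using assms(1) by (simp add: mult_pos_pos)
  moreover have "\<beta> * (2*(k+u0)/3 * u^3) = - (\<beta> * ((-2*(k+u0))/3 * u^3))" by (simp add: field_simps)
  ultimately have "?F (-u) - ?F u > 0" using Phi_odd[of \<beta> k u0 u] by linarith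
  show "u + delta \<beta> k u0 u > 0"
  proof (rule ccontr)
    assume "\<not> ?thesis"
    then have "delta \<beta> k u0 u \<le> -u" by simp
    moreover have "u0 < delta \<beta> k u0 u" using D W by simp
    ultimately have "?F (-u) \<le> ?F (delta \<beta> k u0 u)"
      using Phi_dec[OF assms(1,2), where a="delta \<beta> k u0 u" and b="-u" and c=u0] u by force
    then show False using D \<open>?F (-u) - ?F u > 0\<close> by simp
  qed
qed

end
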